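(* Let $G_{n\times n}$ denote the $n\times n$ square grid graph and $\pi_{\mathrm{opt}}(G_{n\times n})$ its optimal pebbling number. Then $$\liminf_{n\to\infty}\frac{n^2}{\pi_{\mathrm{opt}}(G_{n\times n})}\ \ge\ \frac{7}{2};$$ that is, there are solvable pebble distributions on arbitrarily large square grids whose covering ratios converge to $3.5$.
   Context: A pebble distribution on a graph $G$ is a function $D:V(G)\to\mathbb{N}$; its size is $|D|=\sum_v D(v)$. A pebbling move along an edge $vu$ with $D(v)\ge 2$ removes two pebbles from $v$ and adds one pebble to $u$. A vertex $v$ is reachable under $D$ if $D(v)\ge 1$ or there is a sequence of pebbling moves whose last move places a pebble on $v$. $D$ is solvable if every vertex is reachable. The covering ratio of $D$ is the number of reachable vertices divided by $|D|$. The optimal pebbling number $\pi_{\mathrm{opt}}(G)$ is the minimum size of a solvable distribution on $G$. The $n\times n$ grid $G_{n\times n}$ is the Cartesian product of two paths on $n$ vertices. *)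

theory Defs
  imports Complex_Main "HOL-Library.Extended_Real" "HOL-Library.Liminf_Limsup"
begin

text \<open>A graph is given by a finite vertex set V and a symmetric adjacency
relation E. A pebble distribution is a function D :: 'a => nat that vanishes
outside V.\<close>

definition size_dist :: "'a set \<Rightarrow> ('a \<Rightarrow> nat) \<Rightarrow> nat" where
  "size_dist V D = (\<Sum>v\<in>V. D v)"

definition peb_move :: "'a set \<Rightarrow> ('a \<Rightarrow> 'a \<Rightarrow> bool) \<Rightarrow> ('a \<Rightarrow> nat) \<Rightarrow> ('a \<Rightarrow> nat) \<Rightarrow> bool" where
  "peb_move V E D D' \<longleftrightarrow> (\<exists>v u. v \<in> V \<and> u \<in> V \<and> E v u \<and> D v \<ge> 2 \<and>
       D' = (D(v := D v - 2))(u := D u + 1))"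

definition reachable :: "'a set \<Rightarrow> ('a \<Rightarrow> 'a \<Rightarrow> bool) \<Rightarrow> ('a \<Rightarrow> nat) \<Rightarrow> 'a \<Rightarrow> bool" where
  "reachable V E D v \<longleftrightarrow> D v \<ge> 1 \<or>
     (\<exists>D1 w. (peb_move V E)\<^sup>*\<^sup>* D D1 \<and> w \<in> V \<and> E w v \<and> D1 w \<ge> 2)"

definition solvable :: "'a set \<Rightarrow> ('a \<Rightarrow> 'a \<Rightarrow> bool) \<Rightarrow> ('a \<Rightarrow> nat) \<Rightarrow> bool" where
  "solvable V E D \<longleftrightarrow> (\<forall>v\<in>V. reachable V E D v)"

definition opt_pebbling :: "'a set \<Rightarrow> ('a \<Rightarrow> 'a \<Rightarrow> bool) \<Rightarrow> nat" where
  "opt_pebbling V E = (LEAST k. \<exists>D. (\<forall>v. v \<notin> V \<longrightarrow> D v = 0) \<and>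
        solvable V E D \<and> size_dist V D = k)"

definition grid_V :: "nat \<Rightarrow> (nat \<times> nat) set" where
  "grid_V n = {0..<n} \<times> {0..<n}"

definition grid_E :: "(nat \<times> nat) \<Rightarrow> (nat \<times> nat) \<Rightarrow> bool" where
  "grid_E p q \<longleftrightarrow> (fst p = fst q \<and> (snd p + 1 = snd q \<or> snd q + 1 = snd p)) \<or>
                  (snd p = snd q \<and> (fst p + 1 = fst q \<or> fst q + 1 = fst p))"

end

theory Submission
  imports Defs "HOL-Real_Asymp.Real_Asymp"
begin

lemma mv:
  assumes "v \<in> V" "u \<in> V" "E v u" "2 \<le> D v"
  shows "peb_move V E D ((D(v := D v - 2))(u := D u + 1))"
  using assms unfolding peb_move_def by blast

lemma R1: "1 \<le> D v \<Longrightarrow> reachable V E D v"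
  unfolding reachable_def by simp

lemma R2: "w \<in> V \<Longrightarrow> E w v \<Longrightarrow> 2 \<le> D w \<Longrightarrow> reachable V E D v"
  unfolding reachable_def by blast

lemma R3:
  assumes "a \<in> V" "u \<in> V" "E a u" "E u v" "a \<noteq> u" "4 \<le> D a"
  shows "reachable V E D v"
proof -
  define D1 where "D1 = (D(a := D a - 2))(u := D u + 1)"
  define D2 where "D2 = (D1(a := D1 a - 2))(u := D1 u + 1)"
  have m1: "peb_move V E D D1" unfolding D1_def using assms by (intro mv) auto
  have m2: "peb_move V E D1 D2" unfolding D2_def using assms by (intro mv) (auto simp: D1_def)
  have "(peb_move V E)\<^sup>*\<^sup>* D D2" using m1 m2 by auto
  moreover have "D2 u \<ge> 2" using assms by (simp add: D2_def D1_def)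
  ultimately show ?thesis unfolding reachable_def using assms by blast
qed

lemma R4:
  assumes "a \<in> V" "p \<in> V" "u \<in> V" "b \<in> V" "q \<in> V"
    "E a p" "E p u" "E b q" "E q u" "E u v"
    "distinct [a,p,u,b,q]" "4 \<le> D a" "4 \<le> D b"
  shows "reachable V E D v"
proof -
  define D1 where "D1 = (D(a := D a - 2))(p := D p + 1)"
  define D2 where "D2 = (D1(a := D1 a - 2))(p := D1 p + 1)"
  define D3 where "D3 = (D2(p := D2 p - 2))(u := D2 u + 1)"
  define D4 where "D4 = (D3(b := D3 b - 2))(q := D3 q + 1)"
  define D5 where "D5 = (D4(b := D4 b - 2))(q := D4 q + 1)"
  define D6 where "D6 = (D5(q := D5 q - 2))(u := D5 u + 1)"
  have m1: "peb_move V E D D1" unfolding D1_def using assms by (intro mv) auto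
  have m2: "peb_move V E D1 D2" unfolding D2_def using assms by (intro mv) (auto simp: D1_def)
  have m3: "peb_move V E D2 D3" unfolding D3_def using assms by (intro mv) (auto simp: D1_def D2_def)
  have m4: "peb_move V E D3 D4" unfolding D4_def using assms by (intro mv) (auto simp: D1_def D2_def D3_def)
  have m5: "peb_move V E D4 D5" unfolding D5_def using assms by (intro mv) (auto simp: D1_def D2_def D3_def D4_def)
  have m6: "peb_move V E D5 D6" unfolding D6_def using assms by (intro mv) (auto simp: D1_def D2_def D3_def D4_def D5_def)
  have "(peb_move V E)\<^sup>*\<^sup>* D D6" using m1 m2 m3 m4 m5 m6
    by (meson converse_rtranclp_into_rtranclp rtranclp.rtrancl_refl)
  moreover have "D6 u \<ge> 2" using assms by (simp add: D1_def D2_def D3_def D4_def D5_def D6_def)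
  ultimately show ?thesis unfolding reachable_def using assms by blast
qed


definition Dn :: "nat \<Rightarrow> nat \<times> nat \<Rightarrow> nat" where
  "Dn n p = (if p \<in> grid_V n then
     (if fst p < 3 \<or> snd p < 3 \<or> n \<le> fst p + 3 \<or> n \<le> snd p + 3 then 1 else 0)
     + (if (fst p + 8 * snd p) mod 14 = 0 then 4 else 0) else 0)"

lemma Dn_stack: "a < n \<Longrightarrow> b < n \<Longrightarrow> (a + 8 * b) mod 14 = 0 \<Longrightarrow> 4 \<le> Dn n (a, b)"
  by (simp add: Dn_def grid_V_def)

lemma Dn_bd: "a < n \<Longrightarrow> b < n \<Longrightarrow> a < 3 \<or> b < 3 \<or> n \<le> a + 3 \<or> n \<le> b + 3 \<Longrightarrow> 1 \<le> Dn n (a, b)"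
  by (simp add: Dn_def grid_V_def)


lemma case0:
  assumes "3 \<le> x" "3 \<le> y" "x + 3 < n" "y + 3 < n"
  and k: "x + 8 * y = 14 * k + 0"
  shows "reachable (grid_V n) grid_E (Dn n) (x, y)"
proof -
  have e0: "x + 8 * (y) = 14 * k + 0" using k assms by ((simp add: algebra_simps)?; linarith)
  have s0: "(x + 8 * (y)) mod 14 = 0" unfolding e0 by simp
  have d0: "4 \<le> Dn n (x,y)" using assms by (intro Dn_stack[OF _ _ s0]) auto
  show ?thesis by (rule R1) (use d0 in simp)
qed

lemma case1:
  assumes "3 \<le> x" "3 \<le> y" "x + 3 < n" "y + 3 < n"
  and k: "x + 8 * y = 14 * k + 1"
  shows "reachable (grid_V n) grid_E (Dn n) (x, y)"
proof -
  have e0: "x-1 + 8 * (y) = 14 * k + 0" using k assms by ((simp add: algebra_simps)?; linarith)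
  have s0: "(x-1 + 8 * (y)) mod 14 = 0" unfolding e0 by simp
  have d0: "4 \<le> Dn n (x-1,y)" using assms by (intro Dn_stack[OF _ _ s0]) auto
  show ?thesis apply (rule R2[where w="(x-1,y)"])
    using assms d0 by (auto simp: grid_V_def grid_E_def)
qed

lemma case2:
  assumes "3 \<le> x" "3 \<le> y" "x + 3 < n" "y + 3 < n"
  and k: "x + 8 * y = 14 * k + 2"
  shows "reachable (grid_V n) grid_E (Dn n) (x, y)"
proof -
  have e0: "x-2 + 8 * (y) = 14 * k + 0" using k assms by ((simp add: algebra_simps)?; linarith)
  have s0: "(x-2 + 8 * (y)) mod 14 = 0" unfolding e0 by simp
  have d0: "4 \<le> Dn n (x-2,y)" using assms by (intro Dn_stack[OF _ _ s0]) auto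
  show ?thesis apply (rule R3[where u="(x-1,y)" and a="(x-2,y)"])
    using assms d0 by (auto simp: grid_V_def grid_E_def)
qed

lemma case3:
  assumes "3 \<le> x" "3 \<le> y" "x + 3 < n" "y + 3 < n"
  and k: "x + 8 * y = 14 * k + 3"
  shows "reachable (grid_V n) grid_E (Dn n) (x, y)"
proof -
  have e0: "x-3 + 8 * (y) = 14 * k + 0" using k assms by ((simp add: algebra_simps)?; linarith)
  have s0: "(x-3 + 8 * (y)) mod 14 = 0" unfolding e0 by simp
  have d0: "4 \<le> Dn n (x-3,y)" using assms by (intro Dn_stack[OF _ _ s0]) auto
  have e1: "x-1 + 8 * (y-2) + 14 = 14 * k" using k assms by ((simp add: algebra_simps)?; linarith)
  have s1: "(x-1 + 8 * (y-2)) mod 14 = 0" using arg_cong[OF e1, of "\<lambda>z. z mod 14"] by simp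
  have d1: "4 \<le> Dn n (x-1,y-2)" using assms by (intro Dn_stack[OF _ _ s1]) auto
  show ?thesis apply (rule R4[where a="(x-3,y)" and p="(x-2,y)" and u="(x-1,y)" and q="(x-1,y-1)" and b="(x-1,y-2)"])
    using assms d0 d1 by (auto simp: grid_V_def grid_E_def)
qed

lemma case4:
  assumes "3 \<le> x" "3 \<le> y" "x + 3 < n" "y + 3 < n"
  and k: "x + 8 * y = 14 * k + 4"
  shows "reachable (grid_V n) grid_E (Dn n) (x, y)"
proof -
  have e0: "x+2 + 8 * (y+1) = 14 * k + 14" using k assms by ((simp add: algebra_simps)?; linarith)
  have s0: "(x+2 + 8 * (y+1)) mod 14 = 0" unfolding e0 by simp
  have d0: "4 \<le> Dn n (x+2,y+1)" using assms by (intro Dn_stack[OF _ _ s0]) auto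
  have e1: "x + 8 * (y+3) = 14 * k + 28" using k assms by ((simp add: algebra_simps)?; linarith)
  have s1: "(x + 8 * (y+3)) mod 14 = 0" unfolding e1 by simp
  have d1: "4 \<le> Dn n (x,y+3)" using assms by (intro Dn_stack[OF _ _ s1]) auto
  show ?thesis apply (rule R4[where u="(x,y+1)" and p="(x+1,y+1)" and a="(x+2,y+1)" and q="(x,y+2)" and b="(x,y+3)"])
    using assms d0 d1 by (auto simp: grid_V_def grid_E_def)
qed

lemma case5:
  assumes "3 \<le> x" "3 \<le> y" "x + 3 < n" "y + 3 < n"
  and k: "x + 8 * y = 14 * k + 5"
  shows "reachable (grid_V n) grid_E (Dn n) (x, y)"
proof -
  have e0: "x+1 + 8 * (y+1) = 14 * k + 14" using k assms by ((simp add: algebra_simps)?; linarith)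
  have s0: "(x+1 + 8 * (y+1)) mod 14 = 0" unfolding e0 by simp
  have d0: "4 \<le> Dn n (x+1,y+1)" using assms by (intro Dn_stack[OF _ _ s0]) auto
  show ?thesis apply (rule R3[where u="(x+1,y)" and a="(x+1,y+1)"])
    using assms d0 by (auto simp: grid_V_def grid_E_def)
qed

lemma case6:
  assumes "3 \<le> x" "3 \<le> y" "x + 3 < n" "y + 3 < n"
  and k: "x + 8 * y = 14 * k + 6"
  shows "reachable (grid_V n) grid_E (Dn n) (x, y)"
proof -
  have e0: "x + 8 * (y+1) = 14 * k + 14" using k assms by ((simp add: algebra_simps)?; linarith)
  have s0: "(x + 8 * (y+1)) mod 14 = 0" unfolding e0 by simp
  have d0: "4 \<le> Dn n (x,y+1)" using assms by (intro Dn_stack[OF _ _ s0]) auto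
  show ?thesis apply (rule R2[where w="(x,y+1)"])
    using assms d0 by (auto simp: grid_V_def grid_E_def)
qed

lemma case7:
  assumes "3 \<le> x" "3 \<le> y" "x + 3 < n" "y + 3 < n"
  and k: "x + 8 * y = 14 * k + 7"
  shows "reachable (grid_V n) grid_E (Dn n) (x, y)"
proof -
  have e0: "x+1 + 8 * (y-1) = 14 * k + 0" using k assms by ((simp add: algebra_simps)?; linarith)
  have s0: "(x+1 + 8 * (y-1)) mod 14 = 0" unfolding e0 by simp
  have d0: "4 \<le> Dn n (x+1,y-1)" using assms by (intro Dn_stack[OF _ _ s0]) auto
  show ?thesis apply (rule R3[where u="(x+1,y)" and a="(x+1,y-1)"])
    using assms d0 by (auto simp: grid_V_def grid_E_def)
qed

lemma case8:
  assumes "3 \<le> x" "3 \<le> y" "x + 3 < n" "y + 3 < n"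
  and k: "x + 8 * y = 14 * k + 8"
  shows "reachable (grid_V n) grid_E (Dn n) (x, y)"
proof -
  have e0: "x + 8 * (y-1) = 14 * k + 0" using k assms by ((simp add: algebra_simps)?; linarith)
  have s0: "(x + 8 * (y-1)) mod 14 = 0" unfolding e0 by simp
  have d0: "4 \<le> Dn n (x,y-1)" using assms by (intro Dn_stack[OF _ _ s0]) auto
  show ?thesis apply (rule R2[where w="(x,y-1)"])
    using assms d0 by (auto simp: grid_V_def grid_E_def)
qed

lemma case9:
  assumes "3 \<le> x" "3 \<le> y" "x + 3 < n" "y + 3 < n"
  and k: "x + 8 * y = 14 * k + 9"
  shows "reachable (grid_V n) grid_E (Dn n) (x, y)"
proof -
  have e0: "x-1 + 8 * (y-1) = 14 * k + 0" using k assms by ((simp add: algebra_simps)?; linarith)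
  have s0: "(x-1 + 8 * (y-1)) mod 14 = 0" unfolding e0 by simp
  have d0: "4 \<le> Dn n (x-1,y-1)" using assms by (intro Dn_stack[OF _ _ s0]) auto
  show ?thesis apply (rule R3[where u="(x-1,y)" and a="(x-1,y-1)"])
    using assms d0 by (auto simp: grid_V_def grid_E_def)
qed

lemma case10:
  assumes "3 \<le> x" "3 \<le> y" "x + 3 < n" "y + 3 < n"
  and k: "x + 8 * y = 14 * k + 10"
  shows "reachable (grid_V n) grid_E (Dn n) (x, y)"
proof -
  have e0: "x-2 + 8 * (y-1) = 14 * k + 0" using k assms by ((simp add: algebra_simps)?; linarith)
  have s0: "(x-2 + 8 * (y-1)) mod 14 = 0" unfolding e0 by simp
  have d0: "4 \<le> Dn n (x-2,y-1)" using assms by (intro Dn_stack[OF _ _ s0]) auto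
  have e1: "x + 8 * (y-3) + 14 = 14 * k" using k assms by ((simp add: algebra_simps)?; linarith)
  have s1: "(x + 8 * (y-3)) mod 14 = 0" using arg_cong[OF e1, of "\<lambda>z. z mod 14"] by simp
  have d1: "4 \<le> Dn n (x,y-3)" using assms by (intro Dn_stack[OF _ _ s1]) auto
  show ?thesis apply (rule R4[where u="(x,y-1)" and p="(x-1,y-1)" and a="(x-2,y-1)" and q="(x,y-2)" and b="(x,y-3)"])
    using assms d0 d1 by (auto simp: grid_V_def grid_E_def)
qed

lemma case11:
  assumes "3 \<le> x" "3 \<le> y" "x + 3 < n" "y + 3 < n"
  and k: "x + 8 * y = 14 * k + 11"
  shows "reachable (grid_V n) grid_E (Dn n) (x, y)"
proof -
  have e0: "x+3 + 8 * (y) = 14 * k + 14" using k assms by ((simp add: algebra_simps)?; linarith)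
  have s0: "(x+3 + 8 * (y)) mod 14 = 0" unfolding e0 by simp
  have d0: "4 \<le> Dn n (x+3,y)" using assms by (intro Dn_stack[OF _ _ s0]) auto
  have e1: "x+1 + 8 * (y+2) = 14 * k + 28" using k assms by ((simp add: algebra_simps)?; linarith)
  have s1: "(x+1 + 8 * (y+2)) mod 14 = 0" unfolding e1 by simp
  have d1: "4 \<le> Dn n (x+1,y+2)" using assms by (intro Dn_stack[OF _ _ s1]) auto
  show ?thesis apply (rule R4[where u="(x+1,y)" and p="(x+2,y)" and a="(x+3,y)" and q="(x+1,y+1)" and b="(x+1,y+2)"])
    using assms d0 d1 by (auto simp: grid_V_def grid_E_def)
qed

lemma case12:
  assumes "3 \<le> x" "3 \<le> y" "x + 3 < n" "y + 3 < n"
  and k: "x + 8 * y = 14 * k + 12"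
  shows "reachable (grid_V n) grid_E (Dn n) (x, y)"
proof -
  have e0: "x+2 + 8 * (y) = 14 * k + 14" using k assms by ((simp add: algebra_simps)?; linarith)
  have s0: "(x+2 + 8 * (y)) mod 14 = 0" unfolding e0 by simp
  have d0: "4 \<le> Dn n (x+2,y)" using assms by (intro Dn_stack[OF _ _ s0]) auto
  show ?thesis apply (rule R3[where u="(x+1,y)" and a="(x+2,y)"])
    using assms d0 by (auto simp: grid_V_def grid_E_def)
qed

lemma case13:
  assumes "3 \<le> x" "3 \<le> y" "x + 3 < n" "y + 3 < n"
  and k: "x + 8 * y = 14 * k + 13"
  shows "reachable (grid_V n) grid_E (Dn n) (x, y)"
proof -
  have e0: "x+1 + 8 * (y) = 14 * k + 14" using k assms by ((simp add: algebra_simps)?; linarith)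
  have s0: "(x+1 + 8 * (y)) mod 14 = 0" unfolding e0 by simp
  have d0: "4 \<le> Dn n (x+1,y)" using assms by (intro Dn_stack[OF _ _ s0]) auto
  show ?thesis apply (rule R2[where w="(x+1,y)"])
    using assms d0 by (auto simp: grid_V_def grid_E_def)
qed

lemma interior:
  assumes "3 \<le> x" "3 \<le> y" "x + 3 < n" "y + 3 < n"
  shows "reachable (grid_V n) grid_E (Dn n) (x, y)"
proof -
  define c where "c = (x + 8 * y) mod 14"
  have k: "x + 8 * y = 14 * ((x + 8 * y) div 14) + c" unfolding c_def by simp
  have "c < 14" unfolding c_def by simp
  then have "c = 0 \<or> c = 1 \<or> c = 2 \<or> c = 3 \<or> c = 4 \<or> c = 5 \<or> c = 6 \<or> c = 7 \<or> c = 8 \<or> c = 9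
     \<or> c = 10 \<or> c = 11 \<or> c = 12 \<or> c = 13" by arith
  moreover have "c = 0 \<Longrightarrow> ?thesis" using k case0[OF assms, where k="(x + 8 * y) div 14"] by simp
  moreover have "c = 1 \<Longrightarrow> ?thesis" using k case1[OF assms, where k="(x + 8 * y) div 14"] by simp
  moreover have "c = 2 \<Longrightarrow> ?thesis" using k case2[OF assms, where k="(x + 8 * y) div 14"] by simp
  moreover have "c = 3 \<Longrightarrow> ?thesis" using k case3[OF assms, where k="(x + 8 * y) div 14"] by simp
  moreover have "c = 4 \<Longrightarrow> ?thesis" using k case4[OF assms, where k="(x + 8 * y) div 14"] by simp
  moreover have "c = 5 \<Longrightarrow> ?thesis" using k case5[OF assms, where k="(x + 8 * y) div 14"] by simp
  moreover have "c = 6 \<Longrightarrow> ?thesis" using k case6[OF assms, where k="(x + 8 * y) div 14"] by simp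
  moreover have "c = 7 \<Longrightarrow> ?thesis" using k case7[OF assms, where k="(x + 8 * y) div 14"] by simp
  moreover have "c = 8 \<Longrightarrow> ?thesis" using k case8[OF assms, where k="(x + 8 * y) div 14"] by simp
  moreover have "c = 9 \<Longrightarrow> ?thesis" using k case9[OF assms, where k="(x + 8 * y) div 14"] by simp
  moreover have "c = 10 \<Longrightarrow> ?thesis" using k case10[OF assms, where k="(x + 8 * y) div 14"] by simp
  moreover have "c = 11 \<Longrightarrow> ?thesis" using k case11[OF assms, where k="(x + 8 * y) div 14"] by simp
  moreover have "c = 12 \<Longrightarrow> ?thesis" using k case12[OF assms, where k="(x + 8 * y) div 14"] by simp
  moreover have "c = 13 \<Longrightarrow> ?thesis" using k case13[OF assms, where k="(x + 8 * y) div 14"] by simp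
  ultimately show ?thesis by blast
qed

lemma solv: "solvable (grid_V n) grid_E (Dn n)"
  unfolding solvable_def
proof
  fix v assume v: "v \<in> grid_V n"
  obtain x y where xy: "v = (x, y)" "x < n" "y < n" using v by (auto simp: grid_V_def)
  show "reachable (grid_V n) grid_E (Dn n) v"
  proof (cases "3 \<le> x \<and> 3 \<le> y \<and> x + 3 < n \<and> y + 3 < n")
    case True then show ?thesis using interior xy by auto
  next
    case False
    then have "x < 3 \<or> y < 3 \<or> n \<le> x + 3 \<or> n \<le> y + 3" by auto
    then show ?thesis using xy Dn_bd[of x n y] by (intro R1) auto
  qed
qed

lemma opt_le: "opt_pebbling (grid_V n) grid_E \<le> size_dist (grid_V n) (Dn n)"
  unfolding opt_pebbling_def
  by (rule Least_le) (rule exI[of _ "Dn n"], auto simp: Dn_def solv)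

lemma zero_stays: "(peb_move V E)\<^sup>*\<^sup>* D D1 \<Longrightarrow> D = (\<lambda>_. 0) \<Longrightarrow> D1 = (\<lambda>_. 0)"
proof (induction rule: rtranclp_induct)
  case base then show ?case by simp
next
  case (step D1 D2) then show ?case by (auto simp: peb_move_def)
qed

lemma opt_pos: assumes "0 < n" shows "0 < opt_pebbling (grid_V n) grid_E"
proof (rule ccontr)
  assume "\<not> 0 < opt_pebbling (grid_V n) grid_E"
  then have o0: "opt_pebbling (grid_V n) grid_E = 0" by simp
  have ex: "\<exists>D. (\<forall>v. v \<notin> grid_V n \<longrightarrow> D v = 0) \<and> solvable (grid_V n) grid_E D \<and>
        size_dist (grid_V n) D = size_dist (grid_V n) (Dn n)"
    by (rule exI[of _ "Dn n"]) (auto simp: Dn_def solv)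
  have ex2: "\<exists>k. \<exists>D. (\<forall>v. v \<notin> grid_V n \<longrightarrow> D v = 0) \<and> solvable (grid_V n) grid_E D \<and>
        size_dist (grid_V n) D = k" using ex by blast
  from LeastI_ex[OF ex2] o0 obtain D where
    D: "\<forall>v. v \<notin> grid_V n \<longrightarrow> D v = 0" "solvable (grid_V n) grid_E D" "size_dist (grid_V n) D = 0"
    unfolding opt_pebbling_def by auto
  have fin: "finite (grid_V n)" by (simp add: grid_V_def)
  have "\<forall>v\<in>grid_V n. D v = 0" using D(3) fin by (simp add: size_dist_def)
  then have Dz: "D = (\<lambda>_. 0)" using D(1) by (intro ext) metis
  have mem: "(0, 0) \<in> grid_V n" using assms by (simp add: grid_V_def)
  have "reachable (grid_V n) grid_E D (0, 0)" using D(2) mem by (simp add: solvable_def)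
  then show False unfolding reachable_def using zero_stays[of "grid_V n" grid_E D] Dz by fastforce
qed

lemma card_stack: "card ({0..<n} \<inter> {x. (x + t) mod 14 = (0::nat)}) \<le> n div 14 + 1"
proof -
  let ?S = "{0..<n} \<inter> {x. (x + t) mod 14 = (0::nat)}"
  have inj: "inj_on (\<lambda>x. x div 14) ?S"
  proof (rule inj_onI)
    fix a b assume "a \<in> ?S" "b \<in> ?S" "a div 14 = b div 14"
    then have h: "14 dvd (a + t)" "14 dvd (b + t)" "a div 14 = b div 14" by (auto simp: dvd_eq_mod_eq_0)
    have ea: "14 * (a div 14) + a mod 14 = a" "a mod 14 < 14" by simp_all
    have eb: "14 * (b div 14) + b mod 14 = b" "b mod 14 < 14" by simp_all
    show "a = b"
    proof (rule ccontr)
      assume "a \<noteq> b"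
      then consider "a < b" | "b < a" by linarith
      then show False
      proof cases
        case 1
        have "14 dvd (b + t) - (a + t)" using h by (intro dvd_diff_nat)
        moreover have "(b + t) - (a + t) = b - a" by simp
        ultimately have "14 dvd (b - a)" by simp
        moreover have "0 < b - a" "b - a < 14" using 1 ea eb h(3) by linarith+
        ultimately show False using dvd_imp_le[of 14 "b - a"] by linarith
      next
        case 2
        have "14 dvd (a + t) - (b + t)" using h by (intro dvd_diff_nat)
        moreover have "(a + t) - (b + t) = a - b" by simp
        ultimately have "14 dvd (a - b)" by simp
        moreover have "0 < a - b" "a - b < 14" using 2 ea eb h(3) by linarith+
        ultimately show False using dvd_imp_le[of 14 "a - b"] by linarith
      qed
    qed
  qed
  have "(\<lambda>x. x div 14) ` ?S \<subseteq> {..n div 14}" by (auto intro: div_le_mono)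
  then have "card ((\<lambda>x. x div 14) ` ?S) \<le> n div 14 + 1"
    using card_mono[of "{..n div 14}"] by fastforce
  moreover have "card ((\<lambda>x. x div 14) ` ?S) = card ?S" by (rule card_image[OF inj])
  ultimately show ?thesis by linarith
qed

lemma card_bd: "card ({0..<n} \<inter> {x. x < 3 \<or> n \<le> x + (3::nat)}) \<le> 6"
proof -
  have "{0..<n} \<inter> {x. x < 3 \<or> n \<le> x + (3::nat)} \<subseteq> {0..<3} \<union> {n-3..<n}" by auto
  then have "card ({0..<n} \<inter> {x. x < 3 \<or> n \<le> x + (3::nat)}) \<le> card ({0..<3} \<union> {n-3..<(n::nat)})"
    by (intro card_mono) auto
  also have "\<dots> \<le> card {0..<3::nat} + card {n-3..<(n::nat)}" by (rule card_Un_le)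
  also have "\<dots> \<le> 6" by simp
  finally show ?thesis .
qed

lemma size_bd: "size_dist (grid_V n) (Dn n) \<le> 12 * n + 4 * n * (n div 14 + 1)"
proof -
  define bx where "bx z = (of_bool (z < 3 \<or> n \<le> z + 3) :: nat)" for z :: nat
  define st where "st x y = 4 * (of_bool ((x + 8 * y) mod 14 = 0) :: nat)" for x y :: nat
  have pw: "Dn n (x, y) \<le> bx x + bx y + st x y" if "x < n" "y < n" for x y :: nat
    using that by (auto simp: Dn_def bx_def st_def grid_V_def)
  have "size_dist (grid_V n) (Dn n) = (\<Sum>x<n. \<Sum>y<n. Dn n (x, y))"
    by (simp add: size_dist_def grid_V_def sum.cartesian_product atLeast0LessThan)
  also have "\<dots> \<le> (\<Sum>x<n. \<Sum>y<n. bx x + bx y + st x y)"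
    by (intro sum_mono) (auto intro: pw)
  also have "\<dots> = (\<Sum>x<n. \<Sum>y<n. bx x) + (\<Sum>x<n. \<Sum>y<n. bx y) + (\<Sum>x<n. \<Sum>y<n. st x y)"
    by (simp only: sum.distrib)
  also have "\<dots> \<le> 6 * n + 6 * n + 4 * n * (n div 14 + 1)"
  proof -
    have "(\<Sum>x<n. bx x) = card ({..<n} \<inter> {x. x < 3 \<or> n \<le> x + 3})"
      unfolding bx_def by (rule trans[OF sum_of_bool_eq]) simp_all
    then have b: "(\<Sum>x<n. bx x) \<le> 6" using card_bd[of n] by (simp add: atLeast0LessThan)
    have s: "(\<Sum>x<n. st x y) \<le> 4 * (n div 14 + 1)" for y
    proof -
      have "(\<Sum>x<n. (of_bool ((x + 8 * y) mod 14 = 0) :: nat)) = card ({..<n} \<inter> {x. (x + 8 * y) mod 14 = 0})"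
        by (rule trans[OF sum_of_bool_eq]) simp_all
      then have "(\<Sum>x<n. st x y) = 4 * card ({0..<n} \<inter> {x. (x + 8 * y) mod 14 = 0})"
        unfolding st_def by (simp add: sum_distrib_left[symmetric] atLeast0LessThan)
      also have "\<dots> \<le> 4 * (n div 14 + 1)" using card_stack[of n "8 * y"] by simp
      finally show ?thesis .
    qed
    have 1: "(\<Sum>x<n. \<Sum>y<n. bx x) \<le> 6 * n"
    proof -
      have "(\<Sum>x<n. \<Sum>y<n. bx x) = n * (\<Sum>x<n. bx x)" by (simp add: sum_distrib_left)
      then show ?thesis using mult_le_mono2[OF b, of n] by (simp add: mult.commute)
    qed
    have 2: "(\<Sum>x<n. \<Sum>y<n. bx y) \<le> 6 * n" using b by simp
    have sw: "(\<Sum>x<n. \<Sum>y<n. st x y) = (\<Sum>y<n. \<Sum>x<n. st x y)" by (rule sum.swap)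
    have 3: "(\<Sum>x<n. \<Sum>y<n. st x y) \<le> 4 * n * (n div 14 + 1)"
    proof -
      have "(\<Sum>y<n. \<Sum>x<n. st x y) \<le> (\<Sum>y<n. 4 * (n div 14 + 1))"
        by (rule sum_mono) (rule s)
      also have "\<dots> = 4 * n * (n div 14 + 1)" by (simp add: algebra_simps)
      finally show ?thesis unfolding sw .
    qed
    show ?thesis using 1 2 3 by linarith
  qed
  finally show ?thesis by simp
qed

lemma ratio_bd:
  assumes "0 < n"
  shows "7 * real n / (2 * real n + 112) \<le> real (n^2) / real (opt_pebbling (grid_V n) grid_E)"
proof -
  define o' where "o' = opt_pebbling (grid_V n) grid_E"
  have op: "0 < o'" using opt_pos[OF assms] by (simp add: o'_def)
  have ob: "o' \<le> 12 * n + 4 * n * (n div 14 + 1)" using opt_le[of n] size_bd[of n] by (simp add: o'_def)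
  have "14 * (n div 14) \<le> n" by simp
  then have d: "14 * real (n div 14) \<le> real n" proof -
    have "real (14 * (n div 14)) \<le> real n" using \<open>14 * (n div 14) \<le> n\<close> by (simp only: of_nat_le_iff)
    then show ?thesis by simp
  qed
  have "real o' \<le> real (12 * n + 4 * n * (n div 14 + 1))"
    using ob by (simp only: of_nat_le_iff)
  also have "\<dots> = 12 * real n + 4 * real n * (real (n div 14) + 1)" by (simp add: algebra_simps)
  also have "\<dots> \<le> 12 * real n + 4 * real n * (real n / 14 + 1)"
    using d by (intro add_left_mono mult_left_mono) auto
  finally have A: "7 * real o' \<le> real n * (2 * real n + 112)" by (simp add: algebra_simps)
  have B: "7 * real n * real o' \<le> real n * (real n * (2 * real n + 112))"
    using mult_left_mono[OF A, of "real n"] by (simp add: algebra_simps)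
  have pos1: "0 < 2 * real n + 112" by simp
  have pos2: "0 < real o'" using op by simp
  show ?thesis unfolding o'_def[symmetric]
    using B pos1 pos2 by (simp add: divide_simps power2_eq_square algebra_simps)
qed

theorem mainTheorem2:
  shows "liminf (\<lambda>n::nat. ereal (real (n^2) / real (opt_pebbling (grid_V n) grid_E)))
           \<ge> ereal (7/2)"
proof -
  have lim: "(\<lambda>n::nat. ereal (7 * real n / (2 * real n + 112))) \<longlonglongrightarrow> ereal (7/2)"
  proof -
    have L: "((\<lambda>x::real. 7 * x / (2 * x + 112)) \<longlongrightarrow> 7/2) at_top" by real_asymp
    show ?thesis unfolding lim_ereal by (rule filterlim_compose[OF L filterlim_real_sequentially])
  qed
  have "liminf (\<lambda>n::nat. ereal (7 * real n / (2 * real n + 112))) = ereal (7/2)"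
    by (rule lim_imp_Liminf[OF _ lim]) simp
  moreover have "liminf (\<lambda>n::nat. ereal (7 * real n / (2 * real n + 112)))
     \<le> liminf (\<lambda>n::nat. ereal (real (n^2) / real (opt_pebbling (grid_V n) grid_E)))"
    by (rule Liminf_mono) (use ratio_bd in \<open>auto simp: eventually_sequentially intro!: exI[of _ 1]\<close>)
  ultimately show ?thesis by simp
qed
end
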